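(* Let $f:\mathbb{R}^n\to\overline{\mathbb{R}}$ be $\mathcal{C}^2$-smooth around $\bar x$ and $g:\mathbb{R}^n\to\overline{\mathbb{R}}$ proper lower semicontinuous. Then for any $\bar v\in\partial g(\bar x)$ we have $\nabla f(\bar x)+\bar v\in\partial(f+g)(\bar x)$ and $\mathrm{quad}(f+g)(\bar x|\nabla f(\bar x)+\bar v)=\tfrac12q_{\nabla^2f(\bar x)}+\mathrm{quad}\,g(\bar x|\bar v)$, i.e. the set of functions $\tfrac12q_{\nabla^2f(\bar x)}+p$ with $p\in\mathrm{quad}\,g(\bar x|\bar v)$. In particular, $\mathrm{quad}\,f(\bar x|\nabla f(\bar x))=\{\tfrac12d^2f(\bar x|\nabla f(\bar x))\}=\{\tfrac12q_{\nabla^2f(\bar x)}\}$.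
   Context: $q_A(x)=\langle x,Ax\rangle$. $\partial$ is the limiting subdifferential. $d^2h(x|v)(w)=\liminf_{t\downarrow0,w'\to w}\frac{h(x+tw')-h(x)-t\langle v,w'\rangle}{\frac12t^2}$; twice epi-differentiability at $x$ for $v$ means these quotients epi-converge as $t\downarrow0$. A generalized quadratic form is $\frac12q_A+\delta_L$ with $A$ symmetric, $L$ a linear subspace. $h$ is generalized twice differentiable at $x$ for $v\in\partial h(x)$ if twice epi-differentiable there with $d^2h(x|v)$ a generalized quadratic form. $\Omega_h=\{(x,v)\in\operatorname{gph}\partial h:h$ generalized twice differentiable at $x$ for $v\}$. The quadratic bundle $\mathrm{quad}\,h(\bar x|\bar v)$ is the set of generalized quadratic forms $q$ for which there exist $(x_k,v_k)\in\Omega_h$, $(x_k,v_k)\to(\bar x,\bar v)$, $h(x_k)\to h(\bar x)$, with $\frac12d^2h(x_k|v_k)$ epi-converging to $q$. *)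

theory Defs
  imports "HOL-Analysis.Analysis"
begin

type_synonym 'n efun = "real^'n \<Rightarrow> ereal"

definition proper_fun :: "'n::finite efun \<Rightarrow> bool" where
  "proper_fun h \<longleftrightarrow> (\<forall>x. h x \<noteq> -\<infinity>) \<and> (\<exists>x. h x \<noteq> \<infinity>)"

definition lsc_fun :: "'n::finite efun \<Rightarrow> bool" where
  "lsc_fun h \<longleftrightarrow> (\<forall>x. h x \<le> Liminf (at x) h)"

definition C2_around :: "'n::finite efun \<Rightarrow> real^'n \<Rightarrow> (real^'n \<Rightarrow> real^'n)
    \<Rightarrow> (real^'n \<Rightarrow> real^'n^'n) \<Rightarrow> bool" where
  "C2_around f xb G H \<longleftrightarrow> (\<exists>U f0. open U \<and> xb \<in> U \<and>
     (\<forall>x\<in>U. f x = ereal (f0 x)) \<and>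
     (\<forall>x\<in>U. (f0 has_derivative (\<lambda>w. G x \<bullet> w)) (at x)) \<and>
     (\<forall>x\<in>U. (G has_derivative (\<lambda>w. H x *v w)) (at x)) \<and>
     continuous_on U H)"

definition reg_subdiff :: "'n::finite efun \<Rightarrow> real^'n \<Rightarrow> (real^'n) set" where
  "reg_subdiff h x = {v. h x \<noteq> \<infinity> \<and> h x \<noteq> -\<infinity> \<and>
     (\<forall>e>0. \<exists>d>0. \<forall>y. dist y x < d \<longrightarrow>
        ereal (real_of_ereal (h x) + v \<bullet> (y - x) - e * norm (y - x)) \<le> h y)}"

definition lim_subdiff :: "'n::finite efun \<Rightarrow> real^'n \<Rightarrow> (real^'n) set" where
  "lim_subdiff h x = {v. h x \<noteq> \<infinity> \<and> h x \<noteq> -\<infinity> \<and>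
     (\<exists>xs vs. (\<forall>k. vs k \<in> reg_subdiff h (xs k)) \<and> xs \<longlonglongrightarrow> x \<and> vs \<longlonglongrightarrow> v \<and>
        (\<lambda>k. h (xs k)) \<longlonglongrightarrow> h x)}"

definition sdq :: "'n::finite efun \<Rightarrow> real^'n \<Rightarrow> real^'n \<Rightarrow> real \<Rightarrow> real^'n \<Rightarrow> ereal" where
  "sdq h x v t w = (h (x + t *\<^sub>R w) - h x - ereal (t * (v \<bullet> w))) / ereal (t\<^sup>2 / 2)"

definition d2 :: "'n::finite efun \<Rightarrow> real^'n \<Rightarrow> real^'n \<Rightarrow> real^'n \<Rightarrow> ereal" where
  "d2 h x v w = Liminf (at_right 0 \<times>\<^sub>F nhds w) (\<lambda>(t, w'). sdq h x v t w')"

definition epi_conv :: "(nat \<Rightarrow> 'n::finite efun) \<Rightarrow> 'n efun \<Rightarrow> bool" where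
  "epi_conv phi p \<longleftrightarrow> (\<forall>w.
     (\<forall>ws. ws \<longlonglongrightarrow> w \<longrightarrow> p w \<le> liminf (\<lambda>k. phi k (ws k))) \<and>
     (\<exists>ws. ws \<longlonglongrightarrow> w \<and> limsup (\<lambda>k. phi k (ws k)) \<le> p w))"

definition twice_epi_diff :: "'n::finite efun \<Rightarrow> real^'n \<Rightarrow> real^'n \<Rightarrow> bool" where
  "twice_epi_diff h x v \<longleftrightarrow> (\<forall>ts. (\<forall>k. ts k > 0) \<longrightarrow> ts \<longlonglongrightarrow> 0 \<longrightarrow>
     epi_conv (\<lambda>k. sdq h x v (ts k)) (d2 h x v))"

definition qf :: "real^'n^'n \<Rightarrow> real^'n \<Rightarrow> real" where
  "qf A w = w \<bullet> (A *v w)"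

definition gen_quad_form :: "'n::finite efun \<Rightarrow> bool" where
  "gen_quad_form q \<longleftrightarrow> (\<exists>A L. transpose A = A \<and> subspace L \<and>
     q = (\<lambda>w. if w \<in> L then ereal (qf A w / 2) else \<infinity>))"

definition gen_twice_diff :: "'n::finite efun \<Rightarrow> real^'n \<Rightarrow> real^'n \<Rightarrow> bool" where
  "gen_twice_diff h x v \<longleftrightarrow> twice_epi_diff h x v \<and> gen_quad_form (d2 h x v)"

definition Omega :: "'n::finite efun \<Rightarrow> ((real^'n) \<times> (real^'n)) set" where
  "Omega h = {(x, v). v \<in> lim_subdiff h x \<and> gen_twice_diff h x v}"

definition quad :: "'n::finite efun \<Rightarrow> real^'n \<Rightarrow> real^'n \<Rightarrow> ('n efun) set" where
  "quad h xb vb = {q. gen_quad_form q \<and>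
     (\<exists>xs vs. (\<forall>k. (xs k, vs k) \<in> Omega h) \<and> xs \<longlonglongrightarrow> xb \<and> vs \<longlonglongrightarrow> vb \<and>
        (\<lambda>k. h (xs k)) \<longlonglongrightarrow> h xb \<and>
        epi_conv (\<lambda>k w. ereal (1/2) * d2 h (xs k) (vs k) w) q)}"

end

theory Submission
  imports Defs
begin
lemma Liminf_plus_conv:
  fixes a :: "'a \<Rightarrow> ereal" and b :: "'a \<Rightarrow> real"
  assumes F: "F \<noteq> bot" and b: "(b \<longlongrightarrow> c) F"
  shows "Liminf F (\<lambda>z. a z + ereal (b z)) = Liminf F a + ereal c"
proof (rule antisym)
  show "Liminf F (\<lambda>z. a z + ereal (b z)) \<le> Liminf F a + ereal c"
  proof (rule ereal_le_epsilon2)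
    fix e :: real assume e: "0 < e"
    have ev: "eventually (\<lambda>z. b z \<le> c + e) F"
      using tendstoD[OF b e] by eventually_elim (auto simp: dist_real_def)
    have "Liminf F (\<lambda>z. a z + ereal (b z)) \<le> Liminf F (\<lambda>z. a z + ereal (c + e))"
      by (rule Liminf_mono) (use ev in eventually_elim, auto intro: add_left_mono)
    also have "\<dots> = Liminf F a + ereal (c + e)"
      by (rule Liminf_add_ereal_right[OF F]) simp
    finally show "Liminf F (\<lambda>z. a z + ereal (b z)) \<le> Liminf F a + ereal c + ereal e"
      by (simp add: add.assoc)
  qed
  show "Liminf F a + ereal c \<le> Liminf F (\<lambda>z. a z + ereal (b z))"
  proof (rule ereal_le_epsilon2)
    fix e :: real assume e: "0 < e"
    have ev: "eventually (\<lambda>z. c - e \<le> b z) F"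
      using tendstoD[OF b e] by eventually_elim (auto simp: dist_real_def)
    have "Liminf F a + ereal (c - e) = Liminf F (\<lambda>z. a z + ereal (c - e))"
      by (rule Liminf_add_ereal_right[OF F, symmetric]) simp
    also have "\<dots> \<le> Liminf F (\<lambda>z. a z + ereal (b z))"
      by (rule Liminf_mono) (use ev in eventually_elim, auto intro: add_left_mono)
    finally have "Liminf F a + ereal (c - e) + ereal e \<le> Liminf F (\<lambda>z. a z + ereal (b z)) + ereal e"
      by (rule add_right_mono)
    then show "Liminf F a + ereal c \<le> Liminf F (\<lambda>z. a z + ereal (b z)) + ereal e"
      by (simp add: add.assoc)
  qed
qed

lemma Limsup_plus_conv:
  fixes a :: "'a \<Rightarrow> ereal" and b :: "'a \<Rightarrow> real"
  assumes F: "F \<noteq> bot" and b: "(b \<longlongrightarrow> c) F"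
  shows "Limsup F (\<lambda>z. a z + ereal (b z)) = Limsup F a + ereal c"
proof (rule antisym)
  show "Limsup F (\<lambda>z. a z + ereal (b z)) \<le> Limsup F a + ereal c"
  proof (rule ereal_le_epsilon2)
    fix e :: real assume e: "0 < e"
    have ev: "eventually (\<lambda>z. b z \<le> c + e) F"
      using tendstoD[OF b e] by eventually_elim (auto simp: dist_real_def)
    have "Limsup F (\<lambda>z. a z + ereal (b z)) \<le> Limsup F (\<lambda>z. a z + ereal (c + e))"
      by (rule Limsup_mono) (use ev in eventually_elim, auto intro: add_left_mono)
    also have "\<dots> = Limsup F a + ereal (c + e)"
      by (rule Limsup_add_ereal_right[OF F]) simp
    finally show "Limsup F (\<lambda>z. a z + ereal (b z)) \<le> Limsup F a + ereal c + ereal e"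
      by (simp add: add.assoc)
  qed
  show "Limsup F a + ereal c \<le> Limsup F (\<lambda>z. a z + ereal (b z))"
  proof (rule ereal_le_epsilon2)
    fix e :: real assume e: "0 < e"
    have ev: "eventually (\<lambda>z. c - e \<le> b z) F"
      using tendstoD[OF b e] by eventually_elim (auto simp: dist_real_def)
    have "Limsup F a + ereal (c - e) = Limsup F (\<lambda>z. a z + ereal (c - e))"
      by (rule Limsup_add_ereal_right[OF F, symmetric]) simp
    also have "\<dots> \<le> Limsup F (\<lambda>z. a z + ereal (b z))"
      by (rule Limsup_mono) (use ev in eventually_elim, auto intro: add_left_mono)
    finally have "Limsup F a + ereal (c - e) + ereal e \<le> Limsup F (\<lambda>z. a z + ereal (b z)) + ereal e"
      by (rule add_right_mono)
    then show "Limsup F a + ereal c \<le> Limsup F (\<lambda>z. a z + ereal (b z)) + ereal e"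
      by (simp add: add.assoc)
  qed
qed

lemma epi_unique:
  assumes "epi_conv phi p" "epi_conv phi p'" shows "p = p'"
proof -
  have le: "p w \<le> p' w" if "epi_conv phi p" "epi_conv phi p'" for p p' w
  proof -
    from that(2) obtain ws where ws: "ws \<longlonglongrightarrow> w" "limsup (\<lambda>k. phi k (ws k)) \<le> p' w"
      unfolding epi_conv_def by blast
    have "p w \<le> liminf (\<lambda>k. phi k (ws k))" using that(1) ws(1) unfolding epi_conv_def by blast
    also have "\<dots> \<le> limsup (\<lambda>k. phi k (ws k))" by (rule Liminf_le_Limsup) simp
    finally show ?thesis using ws(2) by simp
  qed
  show ?thesis using le[OF assms] le[OF assms(2,1)] by (intro ext antisym)
qed

lemma epi_shift:
  assumes "epi_conv phi p" shows "epi_conv (\<lambda>k. phi (k + N)) p"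
  unfolding epi_conv_def
proof (intro allI conjI impI)
  fix w
  fix ws :: "nat \<Rightarrow> real^'a" assume ws: "ws \<longlonglongrightarrow> w"
  define ws' where "ws' k = ws (k - N)" for k
  have "(\<lambda>k. ws' (k + N)) \<longlonglongrightarrow> w" using ws by (simp add: ws'_def)
  then have "ws' \<longlonglongrightarrow> w" by (rule LIMSEQ_offset)
  then have "p w \<le> liminf (\<lambda>k. phi k (ws' k))" using assms unfolding epi_conv_def by blast
  also have "liminf (\<lambda>k. phi k (ws' k)) = liminf (\<lambda>k. phi (k + N) (ws' (k + N)))"
    by (rule liminf_shift_k[symmetric])
  also have "\<dots> = liminf (\<lambda>k. phi (k + N) (ws k))" by (simp add: ws'_def)
  finally show "p w \<le> liminf (\<lambda>k. phi (k + N) (ws k))" .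
next
  fix w
  from assms obtain ws where ws: "ws \<longlonglongrightarrow> w" "limsup (\<lambda>k. phi k (ws k)) \<le> p w"
    unfolding epi_conv_def by blast
  show "\<exists>ws. ws \<longlonglongrightarrow> w \<and> limsup (\<lambda>k. phi (k + N) (ws k)) \<le> p w"
  proof (intro exI conjI)
    show "(\<lambda>k. ws (k + N)) \<longlonglongrightarrow> w" using ws(1) by (rule LIMSEQ_ignore_initial_segment)
    have "limsup (\<lambda>k. phi (k + N) (ws (k + N))) = limsup (\<lambda>k. phi k (ws k))"
      by (rule limsup_shift_k[where u="\<lambda>k. phi k (ws k)"])
    then show "limsup (\<lambda>k. phi (k + N) (ws (k + N))) \<le> p w" using ws(2) by simp
  qed
qed

lemma epi_add:
  assumes epi: "epi_conv phi p"
    and H: "\<And>ws w. ws \<longlonglongrightarrow> w \<Longrightarrow>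
      eventually (\<lambda>k. chi k (ws k) = phi k (ws k) + ereal (psi k (ws k))) sequentially
      \<and> (\<lambda>k. psi k (ws k)) \<longlonglongrightarrow> c w"
  shows "epi_conv chi (\<lambda>w. p w + ereal (c w))"
  unfolding epi_conv_def
proof (intro allI conjI impI)
  fix w
  fix ws :: "nat \<Rightarrow> real^'a" assume ws: "ws \<longlonglongrightarrow> w"
  note h = H[OF ws]
  have "liminf (\<lambda>k. chi k (ws k)) = liminf (\<lambda>k. phi k (ws k) + ereal (psi k (ws k)))"
    by (rule Liminf_eq) (use h in simp)
  also have "\<dots> = liminf (\<lambda>k. phi k (ws k)) + ereal (c w)"
    by (rule Liminf_plus_conv) (use h in simp_all)
  finally show "p w + ereal (c w) \<le> liminf (\<lambda>k. chi k (ws k))"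
    using epi ws unfolding epi_conv_def by (auto intro: add_right_mono)
next
  fix w
  from epi obtain ws where ws: "ws \<longlonglongrightarrow> w" "limsup (\<lambda>k. phi k (ws k)) \<le> p w"
    unfolding epi_conv_def by blast
  note h = H[OF ws(1)]
  have "limsup (\<lambda>k. chi k (ws k)) = limsup (\<lambda>k. phi k (ws k) + ereal (psi k (ws k)))"
    by (rule Limsup_eq) (use h in simp)
  also have "\<dots> = limsup (\<lambda>k. phi k (ws k)) + ereal (c w)"
    by (rule Limsup_plus_conv) (use h in simp_all)
  finally show "\<exists>ws. ws \<longlonglongrightarrow> w \<and> limsup (\<lambda>k. chi k (ws k)) \<le> p w + ereal (c w)"
    using ws add_right_mono[OF ws(2), of "ereal (c w)"] by auto
qed

lemma qf_sum: "qf A w = (\<Sum>i\<in>UNIV. w $ i * (\<Sum>j\<in>UNIV. A $ i $ j * w $ j))"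
  by (simp add: qf_def inner_vec_def matrix_vector_mult_def)

lemma tendsto_qf:
  assumes "(A \<longlongrightarrow> A0) F" "(w \<longlongrightarrow> w0) F"
  shows "((\<lambda>z. qf (A z) (w z)) \<longlongrightarrow> qf A0 w0) F"
  unfolding qf_sum
  by (intro tendsto_intros tendsto_vec_nth assms)

lemma qf_scale: "qf A (t *\<^sub>R w) = t\<^sup>2 * qf A w"
  by (simp add: qf_def matrix_vector_mult_scaleR power2_eq_square)

lemma qf_add: "qf (A + B) w = qf A w + qf B w"
  by (simp add: qf_def matrix_vector_mult_add_rdistrib inner_add_right)

lemma qf_transpose: "qf (transpose A) w = qf A w"
  by (simp add: qf_def dot_lmul_matrix[symmetric] inner_commute)
  
lemma mv_scaleA: "(c *\<^sub>R A) *v w = c *\<^sub>R (A *v (w::real^'n))"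
  unfolding vec_eq_iff matrix_vector_mult_def
  by (simp add: scaleR_sum_right sum_distrib_left mult.assoc)

lemma qf_scaleA: "qf (c *\<^sub>R A) w = c * qf A w"
  by (simp add: qf_def mv_scaleA)

lemma transpose_scaleR: "transpose (c *\<^sub>R (A::real^'n^'m)) = c *\<^sub>R transpose A"
  by (simp add: transpose_def vec_eq_iff)

lemma transpose_add': "transpose ((A::real^'n^'m) + B) = transpose A + transpose B"
  by (simp add: transpose_def vec_eq_iff)

lemma gqf_add:
  assumes "gen_quad_form p"
  shows "gen_quad_form (\<lambda>w. p w + ereal (qf B w / 2))"
proof -
  from assms obtain A L where A: "transpose A = A" "subspace L"
    "p = (\<lambda>w. if w \<in> L then ereal (qf A w / 2) else \<infinity>)"
    unfolding gen_quad_form_def by blast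
  define A' where "A' = A + (1/2) *\<^sub>R (B + transpose B)"
  have "transpose A' = A'"
    unfolding A'_def using A(1) by (simp add: transpose_add' transpose_scaleR add.commute)
  moreover have "qf A' w = qf A w + qf B w" for w
    unfolding A'_def by (simp add: qf_add qf_scaleA qf_transpose)
  ultimately show ?thesis unfolding gen_quad_form_def using A(2)
    by (intro exI[of _ A'] exI[of _ L]) (auto simp: A(3) add_divide_distrib)
qed

lemma fst_tendsto0: "(fst \<longlongrightarrow> (0::real)) (at_right 0 \<times>\<^sub>F nhds w)"
proof -
  have "filtermap fst (at_right (0::real) \<times>\<^sub>F nhds w) \<le> at_right 0"
    by (rule filtermap_fst_prod_filter)
  also have "at_right (0::real) \<le> nhds 0" by (simp add: at_within_def)
  finally show ?thesis unfolding filterlim_def .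
qed

lemma snd_tendsto0: "(snd \<longlongrightarrow> w) (at_right (0::real) \<times>\<^sub>F nhds w)"
  unfolding filterlim_def by (rule filtermap_snd_prod_filter)

locale c2loc =
  fixes f :: "real^'n::finite \<Rightarrow> ereal" and f0 :: "real^'n \<Rightarrow> real"
    and G :: "real^'n \<Rightarrow> real^'n" and H :: "real^'n \<Rightarrow> real^'n^'n" and U :: "(real^'n) set"
  assumes U: "open U" and fU: "\<And>x. x \<in> U \<Longrightarrow> f x = ereal (f0 x)"
    and dG: "\<And>x. x \<in> U \<Longrightarrow> (f0 has_derivative (\<lambda>w. G x \<bullet> w)) (at x)"
    and dH: "\<And>x. x \<in> U \<Longrightarrow> (G has_derivative (\<lambda>w. H x *v w)) (at x)"
    and cH: "continuous_on U H"
begin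

lemma line_deriv: "((\<lambda>s. x + s *\<^sub>R d) has_derivative (\<lambda>h. h *\<^sub>R d)) (at s)"
  by (auto intro!: derivative_eq_intros)

lemma taylor:
  assumes seg: "\<And>s. 0 \<le> s \<Longrightarrow> s \<le> 1 \<Longrightarrow> x + s *\<^sub>R d \<in> U"
  shows "\<exists>\<xi>. 0 < \<xi> \<and> \<xi> < 1 \<and> f0 (x + d) = f0 x + G x \<bullet> d + qf (H (x + \<xi> *\<^sub>R d)) d / 2"
proof -
  define diff where "diff m s = (if m = 0 then f0 (x + s *\<^sub>R d) else if m = 1 then G (x + s *\<^sub>R d) \<bullet> d
      else (H (x + s *\<^sub>R d) *v d) \<bullet> d)" for m :: nat and s :: real
  have D: "\<forall>m t. m < 2 \<and> 0 \<le> t \<and> t \<le> 1 \<longrightarrow> DERIV (diff m) t :> diff (Suc m) t"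
  proof (intro allI impI)
    fix m :: nat and t :: real assume mt: "m < 2 \<and> 0 \<le> t \<and> t \<le> 1"
    then have inU: "x + t *\<^sub>R d \<in> U" using seg by auto
    show "DERIV (diff m) t :> diff (Suc m) t"
    proof (cases "m = 0")
      case True
      have "((\<lambda>s. f0 (x + s *\<^sub>R d)) has_derivative (\<lambda>h. G (x + t *\<^sub>R d) \<bullet> (h *\<^sub>R d))) (at t)"
        by (rule has_derivative_compose[OF line_deriv dG[OF inU]])
      moreover have "(\<lambda>h. G (x + t *\<^sub>R d) \<bullet> (h *\<^sub>R d)) = (*) (G (x + t *\<^sub>R d) \<bullet> d)"
        by (auto simp: mult.commute)
      ultimately show ?thesis using True
        by (simp add: has_field_derivative_def diff_def[abs_def])
    next
      case False
      then have m1: "m = 1" using mt by auto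
      have "((\<lambda>s. G (x + s *\<^sub>R d)) has_derivative (\<lambda>h. H (x + t *\<^sub>R d) *v (h *\<^sub>R d))) (at t)"
        by (rule has_derivative_compose[OF line_deriv dH[OF inU]])
      then have "((\<lambda>s. G (x + s *\<^sub>R d) \<bullet> d) has_derivative (\<lambda>h. (H (x + t *\<^sub>R d) *v (h *\<^sub>R d)) \<bullet> d)) (at t)"
        by (rule bounded_linear.has_derivative[OF bounded_linear_inner_left])
      moreover have "(\<lambda>h. (H (x + t *\<^sub>R d) *v (h *\<^sub>R d)) \<bullet> d) = (*) ((H (x + t *\<^sub>R d) *v d) \<bullet> d)"
        by (auto simp: matrix_vector_mult_scaleR mult.commute)
      ultimately show ?thesis using m1
        by (simp add: has_field_derivative_def diff_def[abs_def])
    qed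
  qed
  have "\<exists>t. 0 < t \<and> t < 1 \<and> diff 0 1 = (\<Sum>m<2. (diff m 0 / fact m) * (1 - 0)^m) + (diff 2 t / fact 2) * (1 - 0)^2"
    by (rule Taylor_up[of 2 diff "diff 0" 0 1 0]) (use D in auto)
  then obtain t where t: "0 < t" "t < 1"
    "diff 0 1 = (\<Sum>m<2. (diff m 0 / fact m) * (1 - 0)^m) + (diff 2 t / fact 2) * (1 - 0)^2"
    by blast
  have "(\<Sum>m<2::nat. (diff m 0 / fact m) * (1 - 0)^m) = diff 0 0 + diff 1 0"
    by (simp add: numeral_2_eq_2)
  with t show ?thesis
    by (intro exI[of _ t]) (simp add: diff_def qf_def inner_commute)
qed

definition R :: "real^'n \<Rightarrow> real \<times> (real^'n) \<Rightarrow> real" where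
  "R x z = (f0 (x + fst z *\<^sub>R snd z) - f0 x - fst z * (G x \<bullet> snd z)) / ((fst z)\<^sup>2 / 2)"

lemma ev_small:
  assumes "x \<in> U"
  shows "eventually (\<lambda>z. 0 < fst z \<and> x + fst z *\<^sub>R snd z \<in> U \<and>
     (\<forall>s. 0 \<le> s \<and> s \<le> 1 \<longrightarrow> x + s *\<^sub>R (fst z *\<^sub>R snd z) \<in> U)) (at_right 0 \<times>\<^sub>F nhds w)"
proof -
  obtain r where r: "r > 0" "ball x r \<subseteq> U" using U assms open_contains_ball by blast
  have "((\<lambda>z. fst z *\<^sub>R snd z) \<longlongrightarrow> 0 *\<^sub>R w) (at_right 0 \<times>\<^sub>F nhds w)"
    by (intro tendsto_scaleR fst_tendsto0 snd_tendsto0)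
  then have "((\<lambda>z. norm (fst z *\<^sub>R snd z)) \<longlongrightarrow> 0) (at_right 0 \<times>\<^sub>F nhds w)"
    using tendsto_norm_zero by fastforce
  then have e1: "eventually (\<lambda>z. norm (fst z *\<^sub>R snd z) < r) (at_right 0 \<times>\<^sub>F nhds w)"
    using order_tendstoD(2) r(1) by blast
  have e2: "eventually (\<lambda>z. 0 < fst z) (at_right (0::real) \<times>\<^sub>F nhds w)"
  proof -
    have "eventually (\<lambda>t::real. 0 < t) (at_right 0)" by (rule eventually_at_right_less)
    moreover have fl: "filterlim fst (at_right (0::real)) (at_right 0 \<times>\<^sub>F nhds w)"
      unfolding filterlim_def by (rule filtermap_fst_prod_filter)
    ultimately show ?thesis using fl[unfolded filterlim_iff, rule_format, of "\<lambda>t. 0 < t"] by simp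
  qed
  show ?thesis using e1 e2
  proof eventually_elim
    case (elim z)
    have "x + s *\<^sub>R (fst z *\<^sub>R snd z) \<in> U" if "0 \<le> s" "s \<le> 1" for s
    proof -
      have "norm (s *\<^sub>R (fst z *\<^sub>R snd z)) \<le> norm (fst z *\<^sub>R snd z)"
      proof -
        have "\<bar>s * fst z\<bar> \<le> \<bar>fst z\<bar>" using that by (simp add: abs_mult mult_left_le_one_le)
        then show ?thesis by (simp add: mult_right_mono)
      qed
      then show ?thesis using elim r(2) by (auto simp: dist_norm)
    qed
    from this[of 1] this show ?case using elim by auto
  qed
qed

lemma R_lim:
  assumes x: "x \<in> U"
  shows "(R x \<longlongrightarrow> qf (H x) w) (at_right 0 \<times>\<^sub>F nhds w)"
proof -
  let ?F = "at_right (0::real) \<times>\<^sub>F nhds w"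
  let ?P = "\<lambda>z. 0 < fst z \<and> x + fst z *\<^sub>R snd z \<in> U \<and>
     (\<forall>s. 0 \<le> s \<and> s \<le> 1 \<longrightarrow> x + s *\<^sub>R (fst z *\<^sub>R snd z) \<in> U)"
  have "\<forall>z. \<exists>\<xi>. ?P z \<longrightarrow> 0 \<le> \<xi> \<and> \<xi> \<le> 1 \<and>
      R x z = qf (H (x + \<xi> *\<^sub>R (fst z *\<^sub>R snd z))) (snd z)"
  proof
    fix z :: "real \<times> (real^'n)"
    show "\<exists>\<xi>. ?P z \<longrightarrow> 0 \<le> \<xi> \<and> \<xi> \<le> 1 \<and>
      R x z = qf (H (x + \<xi> *\<^sub>R (fst z *\<^sub>R snd z))) (snd z)"
    proof (cases "?P z")
      case True
      then obtain \<xi> where xi: "0 < \<xi>" "\<xi> < 1"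
        "f0 (x + fst z *\<^sub>R snd z) = f0 x + G x \<bullet> (fst z *\<^sub>R snd z)
           + qf (H (x + \<xi> *\<^sub>R (fst z *\<^sub>R snd z))) (fst z *\<^sub>R snd z) / 2"
        using taylor[of x "fst z *\<^sub>R snd z"] by blast
      have "R x z = qf (H (x + \<xi> *\<^sub>R (fst z *\<^sub>R snd z))) (snd z)"
        using True unfolding R_def xi(3) qf_scale by (simp add: field_simps)
      then show ?thesis using xi by (intro exI[of _ \<xi>]) auto
    qed auto
  qed
  then obtain Xi where Xi: "\<And>z. ?P z \<Longrightarrow> 0 \<le> Xi z \<and> Xi z \<le> 1 \<and>
      R x z = qf (H (x + Xi z *\<^sub>R (fst z *\<^sub>R snd z))) (snd z)"
    by metis
  have ev: "eventually ?P ?F" by (rule ev_small[OF x])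
  have "((\<lambda>z. fst z *\<^sub>R snd z) \<longlongrightarrow> 0 *\<^sub>R w) ?F"
    by (intro tendsto_scaleR fst_tendsto0 snd_tendsto0)
  then have n0: "((\<lambda>z. norm (fst z *\<^sub>R snd z)) \<longlongrightarrow> 0) ?F"
    using tendsto_norm_zero by fastforce
  have "((\<lambda>z. Xi z *\<^sub>R (fst z *\<^sub>R snd z)) \<longlongrightarrow> 0) ?F"
  proof (rule Lim_null_comparison[OF _ n0])
    show "eventually (\<lambda>z. norm (Xi z *\<^sub>R (fst z *\<^sub>R snd z)) \<le> norm (fst z *\<^sub>R snd z)) ?F"
      using ev
    proof eventually_elim
      case (elim z)
      then have "\<bar>Xi z\<bar> \<le> 1" using Xi by auto
      then have "\<bar>Xi z * fst z\<bar> \<le> \<bar>fst z\<bar>" by (simp add: abs_mult mult_left_le_one_le)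
      then show ?case by (simp add: mult_right_mono)
    qed
  qed
  then have "((\<lambda>z. x + Xi z *\<^sub>R (fst z *\<^sub>R snd z)) \<longlongrightarrow> x + 0) ?F"
    by (intro tendsto_add tendsto_const)
  moreover have "isCont H x" using cH U x continuous_on_eq_continuous_at by blast
  ultimately have "((\<lambda>z. H (x + Xi z *\<^sub>R (fst z *\<^sub>R snd z))) \<longlongrightarrow> H x) ?F"
    using isCont_tendsto_compose by fastforce
  then have "((\<lambda>z. qf (H (x + Xi z *\<^sub>R (fst z *\<^sub>R snd z))) (snd z)) \<longlongrightarrow> qf (H x) w) ?F"
    by (intro tendsto_qf snd_tendsto0)
  moreover have "eventually (\<lambda>z. qf (H (x + Xi z *\<^sub>R (fst z *\<^sub>R snd z))) (snd z) = R x z) ?F"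
    using ev by eventually_elim (use Xi in auto)
  ultimately show ?thesis by (rule Lim_transform_eventually)
qed

lemma sdq_sum:
  assumes x: "x \<in> U" and t: "0 < t" and xt: "x + t *\<^sub>R w' \<in> U"
    and gx: "g x \<noteq> \<infinity>" "g x \<noteq> -\<infinity>"
  shows "sdq (\<lambda>y. f y + g y) x (G x + v) t w' = ereal (R x (t, w')) + sdq g x v t w'"
proof -
  obtain c where c: "g x = ereal c" using gx by (cases "g x") auto
  have t2: "t\<^sup>2 / 2 > 0" using t by simp
  show ?thesis
  proof (cases "g (x + t *\<^sub>R w')")
    case (real b)
    have "((f0 (x + t *\<^sub>R w') + b) - (f0 x + c) - t * ((G x + v) \<bullet> w')) / (t\<^sup>2 / 2)
       = (f0 (x + t *\<^sub>R w') - f0 x - t * (G x \<bullet> w')) / (t\<^sup>2 / 2) + (b - c - t * (v \<bullet> w')) / (t\<^sup>2 / 2)"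
      by (simp only: add_divide_distrib[symmetric]) (simp add: inner_add_left algebra_simps)
    then show ?thesis using t2
      by (simp add: sdq_def R_def fU[OF x] fU[OF xt] c real)
  next
    case PInf
    then show ?thesis using t2 by (simp add: sdq_def R_def fU[OF x] fU[OF xt] c)
  next
    case MInf
    then show ?thesis using t2 by (simp add: sdq_def R_def fU[OF x] fU[OF xt] c)
  qed
qed

lemma d2_sum:
  assumes x: "x \<in> U" and gx: "g x \<noteq> \<infinity>" "g x \<noteq> -\<infinity>"
  shows "d2 (\<lambda>y. f y + g y) x (G x + v) w = d2 g x v w + ereal (qf (H x) w)"
proof -
  let ?F = "at_right (0::real) \<times>\<^sub>F nhds w"
  have "d2 (\<lambda>y. f y + g y) x (G x + v) w = Liminf ?F (\<lambda>z. sdq g x v (fst z) (snd z) + ereal (R x z))"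
    unfolding d2_def case_prod_unfold
    by (rule Liminf_eq, use ev_small[OF x, of w] in eventually_elim)
       (use sdq_sum[where g=g and x=x, OF x _ _ gx] in \<open>auto simp: add.commute\<close>)
  also have "\<dots> = Liminf ?F (\<lambda>z. sdq g x v (fst z) (snd z)) + ereal (qf (H x) w)"
    by (rule Liminf_plus_conv[OF _ R_lim[OF x]]) (simp add: prod_filter_eq_bot)
  also have "Liminf ?F (\<lambda>z. sdq g x v (fst z) (snd z)) = d2 g x v w"
    unfolding d2_def case_prod_unfold ..
  finally show ?thesis .
qed

lemma seq_R:
  assumes x: "x \<in> U" and ts: "\<And>k. ts k > 0" "ts \<longlonglongrightarrow> 0" and ws: "ws \<longlonglongrightarrow> w"
  shows "eventually (\<lambda>k. x + ts k *\<^sub>R ws k \<in> U) sequentially \<and> (\<lambda>k. R x (ts k, ws k)) \<longlonglongrightarrow> qf (H x) w"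
proof -
  have "filterlim ts (at_right 0) sequentially"
    by (rule tendsto_imp_filterlim_at_right[OF ts(2)]) (use ts(1) in simp)
  then have fl: "filterlim (\<lambda>k. (ts k, ws k)) (at_right 0 \<times>\<^sub>F nhds w) sequentially"
    using ws by (rule filterlim_Pair)
  have "eventually (\<lambda>k. x + fst (ts k, ws k) *\<^sub>R snd (ts k, ws k) \<in> U) sequentially"
    using eventually_compose_filterlim[OF ev_small[OF x, of w] fl] by (rule eventually_mono) auto
  moreover have "(\<lambda>k. R x (ts k, ws k)) \<longlonglongrightarrow> qf (H x) w"
    using filterlim_compose[OF R_lim[OF x] fl] .
  ultimately show ?thesis by simp
qed

lemma ted_sum:
  assumes x: "x \<in> U" and gx: "g x \<noteq> \<infinity>" "g x \<noteq> -\<infinity>"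
  shows "twice_epi_diff (\<lambda>y. f y + g y) x (G x + v) \<longleftrightarrow> twice_epi_diff g x v"
proof
  assume A: "twice_epi_diff (\<lambda>y. f y + g y) x (G x + v)"
  show "twice_epi_diff g x v" unfolding twice_epi_diff_def
  proof (intro allI impI)
    fix ts :: "nat \<Rightarrow> real" assume ts: "\<forall>k. 0 < ts k" "ts \<longlonglongrightarrow> 0"
    have e: "epi_conv (\<lambda>k. sdq (\<lambda>y. f y + g y) x (G x + v) (ts k)) (d2 (\<lambda>y. f y + g y) x (G x + v))"
      using A ts unfolding twice_epi_diff_def by blast
    have "epi_conv (\<lambda>k. sdq g x v (ts k))
        (\<lambda>w. d2 (\<lambda>y. f y + g y) x (G x + v) w + ereal (- qf (H x) w))"
    proof (rule epi_add[OF e, where psi="\<lambda>k w'. - R x (ts k, w')"])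
      fix ws w assume ws: "ws \<longlonglongrightarrow> (w::real^'n)"
      note sr = seq_R[OF x _ ts(2) ws] 
      have "eventually (\<lambda>k. sdq g x v (ts k) (ws k) = sdq (\<lambda>y. f y + g y) x (G x + v) (ts k) (ws k)
          + ereal (- R x (ts k, ws k))) sequentially"
        using sr ts(1)
      proof (intro eventually_mono[OF conjunct1[OF sr[OF spec[OF ts(1)]]]])
        fix k assume "x + ts k *\<^sub>R ws k \<in> U"
        then have "sdq (\<lambda>y. f y + g y) x (G x + v) (ts k) (ws k) = ereal (R x (ts k, ws k)) + sdq g x v (ts k) (ws k)"
          using sdq_sum[where g=g and x=x, OF x _ _ gx] ts(1) by blast
        then show "sdq g x v (ts k) (ws k) = sdq (\<lambda>y. f y + g y) x (G x + v) (ts k) (ws k)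
          + ereal (- R x (ts k, ws k))"
          by (cases "sdq g x v (ts k) (ws k)") auto
      qed
      moreover have "(\<lambda>k. - R x (ts k, ws k)) \<longlonglongrightarrow> - qf (H x) w"
        using sr[OF spec[OF ts(1)]] by (intro tendsto_minus) blast
      ultimately show "eventually (\<lambda>k. sdq g x v (ts k) (ws k) = sdq (\<lambda>y. f y + g y) x (G x + v) (ts k) (ws k)
          + ereal (- R x (ts k, ws k))) sequentially \<and> (\<lambda>k. - R x (ts k, ws k)) \<longlonglongrightarrow> - qf (H x) w"
        by blast
    qed
    moreover have "(\<lambda>w. d2 (\<lambda>y. f y + g y) x (G x + v) w + ereal (- qf (H x) w)) = d2 g x v"
    proof
      fix w show "d2 (\<lambda>y. f y + g y) x (G x + v) w + ereal (- qf (H x) w) = d2 g x v w"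
        unfolding d2_sum[where g=g and x=x, OF x gx] by (cases "d2 g x v w") auto
    qed
    ultimately show "epi_conv (\<lambda>k. sdq g x v (ts k)) (d2 g x v)" by simp
  qed
next
  assume A: "twice_epi_diff g x v"
  show "twice_epi_diff (\<lambda>y. f y + g y) x (G x + v)" unfolding twice_epi_diff_def
  proof (intro allI impI)
    fix ts :: "nat \<Rightarrow> real" assume ts: "\<forall>k. 0 < ts k" "ts \<longlonglongrightarrow> 0"
    have e: "epi_conv (\<lambda>k. sdq g x v (ts k)) (d2 g x v)"
      using A ts unfolding twice_epi_diff_def by blast
    have "epi_conv (\<lambda>k. sdq (\<lambda>y. f y + g y) x (G x + v) (ts k))
        (\<lambda>w. d2 g x v w + ereal (qf (H x) w))"
    proof (rule epi_add[OF e, where psi="\<lambda>k w'. R x (ts k, w')"])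
      fix ws w assume ws: "ws \<longlonglongrightarrow> (w::real^'n)"
      note sr = seq_R[OF x _ ts(2) ws] 
      have "eventually (\<lambda>k. sdq (\<lambda>y. f y + g y) x (G x + v) (ts k) (ws k) = sdq g x v (ts k) (ws k)
          + ereal (R x (ts k, ws k))) sequentially"
      proof (intro eventually_mono[OF conjunct1[OF sr[OF spec[OF ts(1)]]]])
        fix k assume "x + ts k *\<^sub>R ws k \<in> U"
        then show "sdq (\<lambda>y. f y + g y) x (G x + v) (ts k) (ws k) = sdq g x v (ts k) (ws k)
          + ereal (R x (ts k, ws k))"
          using sdq_sum[where g=g and x=x, OF x _ _ gx] ts(1) by (simp add: add.commute)
      qed
      moreover have "(\<lambda>k. R x (ts k, ws k)) \<longlonglongrightarrow> qf (H x) w"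
        using sr[OF spec[OF ts(1)]] by blast
      ultimately show "eventually (\<lambda>k. sdq (\<lambda>y. f y + g y) x (G x + v) (ts k) (ws k) = sdq g x v (ts k) (ws k)
          + ereal (R x (ts k, ws k))) sequentially \<and> (\<lambda>k. R x (ts k, ws k)) \<longlonglongrightarrow> qf (H x) w"
        by blast
    qed
    moreover have "(\<lambda>w. d2 g x v w + ereal (qf (H x) w)) = d2 (\<lambda>y. f y + g y) x (G x + v)"
      by (rule ext) (simp add: d2_sum[where g=g and x=x, OF x gx])
    ultimately show "epi_conv (\<lambda>k. sdq (\<lambda>y. f y + g y) x (G x + v) (ts k)) (d2 (\<lambda>y. f y + g y) x (G x + v))" by simp
  qed
qed

end

lemma reg_subdiff_add:
  fixes h k :: "real^'n::finite \<Rightarrow> ereal"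
  assumes v: "v \<in> reg_subdiff h x" and U: "open U" "x \<in> U"
    and k: "\<And>y. y \<in> U \<Longrightarrow> k y = h y + ereal (phi y)"
    and dphi: "(phi has_derivative (\<lambda>w. a \<bullet> w)) (at x)"
  shows "v + a \<in> reg_subdiff k x"
proof -
  from v have hx: "h x \<noteq> \<infinity>" "h x \<noteq> -\<infinity>" unfolding reg_subdiff_def by auto
  then obtain c where c: "h x = ereal c" by (cases "h x") auto
  have kx: "k x = ereal (c + phi x)" using k[OF U(2)] c by simp
  show ?thesis unfolding reg_subdiff_def
  proof (intro CollectI conjI allI impI)
    show "k x \<noteq> \<infinity>" "k x \<noteq> -\<infinity>" using kx by auto
    fix e :: real assume e: "0 < e"
    have "\<forall>e>0. \<exists>d>0. \<forall>y. dist y x < d \<longrightarrow>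
        ereal (real_of_ereal (h x) + v \<bullet> (y - x) - e * norm (y - x)) \<le> h y"
      using v unfolding reg_subdiff_def by blast
    from this[rule_format, of "e/2"] e obtain d1 where d1: "d1 > 0" "\<And>y. dist y x < d1 \<Longrightarrow>
        ereal (real_of_ereal (h x) + v \<bullet> (y - x) - (e/2) * norm (y - x)) \<le> h y"
      by auto
    have "\<forall>e>0. \<exists>d>0. \<forall>y. norm (y - x) < d \<longrightarrow>
        norm (phi y - phi x - a \<bullet> (y - x)) \<le> e * norm (y - x)"
      using dphi unfolding has_derivative_at_alt by blast
    from this[rule_format, of "e/2"] e obtain d2 where d2: "d2 > 0" "\<And>y. norm (y - x) < d2 \<Longrightarrow>
        norm (phi y - phi x - a \<bullet> (y - x)) \<le> (e/2) * norm (y - x)"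
      by auto
    from U obtain d3 where d3: "d3 > 0" "ball x d3 \<subseteq> U" using open_contains_ball by blast
    show "\<exists>d>0. \<forall>y. dist y x < d \<longrightarrow>
        ereal (real_of_ereal (k x) + (v + a) \<bullet> (y - x) - e * norm (y - x)) \<le> k y"
    proof (intro exI[of _ "min d1 (min d2 d3)"] conjI allI impI)
      show "0 < min d1 (min d2 d3)" using d1 d2 d3 by simp
      fix y assume y: "dist y x < min d1 (min d2 d3)"
      then have yU: "y \<in> U" using d3 by (auto simp: dist_commute)
      have h1: "ereal (c + v \<bullet> (y - x) - (e/2) * norm (y - x)) \<le> h y"
        using d1(2)[of y] y c by simp
      have "norm (phi y - phi x - a \<bullet> (y - x)) \<le> (e/2) * norm (y - x)"
        using d2(2)[of y] y by (auto simp: dist_norm)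
      then have p1: "phi y \<ge> phi x + a \<bullet> (y - x) - (e/2) * norm (y - x)"
        unfolding real_norm_def abs_le_iff by linarith
      have "ereal (real_of_ereal (k x) + (v + a) \<bullet> (y - x) - e * norm (y - x))
          \<le> ereal (c + v \<bullet> (y - x) - (e/2) * norm (y - x)) + ereal (phi y)"
        using p1 kx by (simp add: inner_add_left)
      also have "\<dots> \<le> h y + ereal (phi y)" using h1 by (rule add_right_mono)
      also have "\<dots> = k y" using k[OF yU] by simp
      finally show "ereal (real_of_ereal (k x) + (v + a) \<bullet> (y - x) - e * norm (y - x)) \<le> k y" .
    qed
  qed
qed

lemma lim_subdiff_add:
  fixes h k :: "real^'n::finite \<Rightarrow> ereal"
  assumes v: "v \<in> lim_subdiff h x" and U: "open U" "x \<in> U"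
    and k: "\<And>y. y \<in> U \<Longrightarrow> k y = h y + ereal (phi y)"
    and dphi: "\<And>y. y \<in> U \<Longrightarrow> (phi has_derivative (\<lambda>w. a y \<bullet> w)) (at y)"
    and ca: "continuous_on U a"
  shows "v + a x \<in> lim_subdiff k x"
proof -
  from v have hx: "h x \<noteq> \<infinity>" "h x \<noteq> -\<infinity>" unfolding lim_subdiff_def by auto
  then obtain c where c: "h x = ereal c" by (cases "h x") auto
  have kx: "k x = ereal c + ereal (phi x)" using k[OF U(2)] c by simp
  from v obtain xs vs where xv: "\<And>j. vs j \<in> reg_subdiff h (xs j)" "xs \<longlonglongrightarrow> x" "vs \<longlonglongrightarrow> v"
    "(\<lambda>j. h (xs j)) \<longlonglongrightarrow> h x"
    unfolding lim_subdiff_def by blast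
  have "eventually (\<lambda>j. xs j \<in> U) sequentially"
    using topological_tendstoD[OF xv(2) U] .
  then obtain N where N: "\<And>j. j \<ge> N \<Longrightarrow> xs j \<in> U" unfolding eventually_sequentially by blast
  define xs' where "xs' j = xs (j + N)" for j
  define vs' where "vs' j = vs (j + N) + a (xs (j + N))" for j
  have xs'U: "xs' j \<in> U" for j using N by (simp add: xs'_def)
  have xs'x: "xs' \<longlonglongrightarrow> x" unfolding xs'_def by (rule LIMSEQ_ignore_initial_segment[OF xv(2)])
  have ia: "isCont a x" using ca U continuous_on_eq_continuous_at by blast
  have iphi: "isCont phi x" using dphi[OF U(2)] has_derivative_continuous by blast
  have r1: "vs' j \<in> reg_subdiff k (xs' j)" for j
    unfolding vs'_def using reg_subdiff_add[OF xv(1) U(1) xs'U[of j, unfolded xs'_def] k dphi[OF xs'U[of j, unfolded xs'_def]]]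
    by (simp add: xs'_def)
  have r3: "vs' \<longlonglongrightarrow> v + a x" unfolding vs'_def
    by (intro tendsto_add LIMSEQ_ignore_initial_segment[OF xv(3)] isCont_tendsto_compose[OF ia]
        LIMSEQ_ignore_initial_segment[OF xv(2)])
  have p: "(\<lambda>j. phi (xs' j)) \<longlonglongrightarrow> phi x"
    by (rule isCont_tendsto_compose[OF iphi xs'x])
  have "(\<lambda>j. h (xs' j) + ereal (phi (xs' j))) \<longlonglongrightarrow> ereal c + ereal (phi x)"
    by (intro tendsto_add_ereal) (use LIMSEQ_ignore_initial_segment[OF xv(4)] c p in
        \<open>auto simp: xs'_def\<close>)
  then have r4: "(\<lambda>j. k (xs' j)) \<longlonglongrightarrow> k x" using k[OF xs'U] kx by simp
  have "k x \<noteq> \<infinity>" "k x \<noteq> -\<infinity>" using kx by auto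
  then show ?thesis unfolding lim_subdiff_def using r1 xs'x r3 r4 by blast
qed

lemma qf_neg: "qf (- A) w = - qf A w"
  using qf_scaleA[of "-1" A w] by simp

context c2loc begin

lemma contG: "continuous_on U G"
  by (intro continuous_at_imp_continuous_on ballI has_derivative_continuous) (erule dH)

lemma isCont_f0: "x \<in> U \<Longrightarrow> isCont f0 x"
  using dG has_derivative_continuous by blast

lemma isCont_H: "x \<in> U \<Longrightarrow> isCont H x"
  using cH U continuous_on_eq_continuous_at by blast

lemma isCont_G: "x \<in> U \<Longrightarrow> isCont G x"
  using contG U continuous_on_eq_continuous_at by blast

lemma lim_sum1:
  assumes x: "x \<in> U" and v: "v \<in> lim_subdiff g x"
  shows "G x + v \<in> lim_subdiff (\<lambda>y. f y + g y) x"
proof -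
  have "v + G x \<in> lim_subdiff (\<lambda>y. f y + g y) x"
    by (rule lim_subdiff_add[OF v U x, where phi=f0 and a=G])
       (auto simp: fU add.commute intro: dG contG)
  then show ?thesis by (simp add: add.commute)
qed

lemma lim_sum2:
  assumes x: "x \<in> U" and u: "G x + v \<in> lim_subdiff (\<lambda>y. f y + g y) x"
  shows "v \<in> lim_subdiff g x"
proof -
  have "G x + v + (- G x) \<in> lim_subdiff g x"
  proof (rule lim_subdiff_add[OF u U x, where phi="\<lambda>y. - f0 y" and a="\<lambda>y. - G y"])
    fix y assume y: "y \<in> U"
    show "g y = f y + g y + ereal (- f0 y)" using fU[OF y] by (cases "g y") auto
    have "((\<lambda>y. - f0 y) has_derivative (\<lambda>w. - (G y \<bullet> w))) (at y)"
      by (rule has_derivative_minus[OF dG[OF y]])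
    then show "((\<lambda>y. - f0 y) has_derivative (\<lambda>w. - G y \<bullet> w)) (at y)" by simp
  next
    show "continuous_on U (\<lambda>y. - G y)" by (intro continuous_on_minus contG)
  qed
  then show ?thesis by simp
qed

lemma fin_sum:
  assumes x: "x \<in> U"
  shows "(f x + g x \<noteq> \<infinity> \<and> f x + g x \<noteq> -\<infinity>) \<longleftrightarrow> (g x \<noteq> \<infinity> \<and> g x \<noteq> -\<infinity>)"
  using fU[OF x] by (cases "g x") auto

lemma gtd_sum:
  assumes x: "x \<in> U" and gx: "g x \<noteq> \<infinity>" "g x \<noteq> -\<infinity>"
  shows "gen_twice_diff (\<lambda>y. f y + g y) x (G x + v) \<longleftrightarrow> gen_twice_diff g x v"
proof -
  have e1: "d2 (\<lambda>y. f y + g y) x (G x + v) = (\<lambda>w. d2 g x v w + ereal (qf (2 *\<^sub>R H x) w / 2))"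
    by (rule ext) (simp add: d2_sum[where g=g and x=x, OF x gx] qf_scaleA)
  have e2: "d2 g x v = (\<lambda>w. d2 (\<lambda>y. f y + g y) x (G x + v) w + ereal (qf ((-2) *\<^sub>R H x) w / 2))"
  proof
    fix w show "d2 g x v w = d2 (\<lambda>y. f y + g y) x (G x + v) w + ereal (qf ((-2) *\<^sub>R H x) w / 2)"
      by (simp add: d2_sum[where g=g and x=x, OF x gx] qf_scaleA qf_neg) (cases "d2 g x v w"; simp)
  qed
  have "gen_quad_form (d2 (\<lambda>y. f y + g y) x (G x + v)) \<longleftrightarrow> gen_quad_form (d2 g x v)"
  proof
    assume "gen_quad_form (d2 (\<lambda>y. f y + g y) x (G x + v))"
    then show "gen_quad_form (d2 g x v)" by (subst e2) (rule gqf_add)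
  next
    assume "gen_quad_form (d2 g x v)"
    then show "gen_quad_form (d2 (\<lambda>y. f y + g y) x (G x + v))" by (subst e1) (rule gqf_add)
  qed
  then show ?thesis unfolding gen_twice_diff_def using ted_sum[where g=g and x=x, OF x gx] by blast
qed

lemma Omega_sum:
  assumes x: "x \<in> U"
  shows "(x, G x + v) \<in> Omega (\<lambda>y. f y + g y) \<longleftrightarrow> (x, v) \<in> Omega g"
proof
  assume A: "(x, G x + v) \<in> Omega (\<lambda>y. f y + g y)"
  then have l: "G x + v \<in> lim_subdiff (\<lambda>y. f y + g y) x" unfolding Omega_def by simp
  then have gx: "g x \<noteq> \<infinity>" "g x \<noteq> -\<infinity>" using fin_sum[OF x] unfolding lim_subdiff_def by auto
  show "(x, v) \<in> Omega g" using A lim_sum2[OF x l] gtd_sum[where g=g, OF x gx]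
    unfolding Omega_def by auto
next
  assume A: "(x, v) \<in> Omega g"
  then have l: "v \<in> lim_subdiff g x" unfolding Omega_def by simp
  then have gx: "g x \<noteq> \<infinity>" "g x \<noteq> -\<infinity>" unfolding lim_subdiff_def by auto
  show "(x, G x + v) \<in> Omega (\<lambda>y. f y + g y)" using A lim_sum1[OF x l] gtd_sum[where g=g, OF x gx]
    unfolding Omega_def by auto
qed

end

lemma ereal_half_distr: "ereal (1/2) * (D + ereal Q) = ereal (1/2) * D + ereal (Q / 2)"
  by (cases D) auto

context c2loc begin

lemma seqU:
  assumes "xs \<longlonglongrightarrow> xb" "xb \<in> U"
  obtains N where "\<And>k. xs (k + N) \<in> U"
proof -
  have "eventually (\<lambda>j. xs j \<in> U) sequentially"
    using topological_tendstoD[OF assms(1) U assms(2)] .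
  then obtain N where "\<And>j. j \<ge> N \<Longrightarrow> xs j \<in> U" unfolding eventually_sequentially by blast
  then show ?thesis using that[of N] by simp
qed

lemma qf_H_tendsto:
  assumes "xs \<longlonglongrightarrow> xb" "xb \<in> U" "ws \<longlonglongrightarrow> w"
  shows "(\<lambda>k. qf (c *\<^sub>R H (xs k)) (ws k) / 2) \<longlonglongrightarrow> qf (c *\<^sub>R H xb) w / 2"
  by (intro tendsto_divide tendsto_const tendsto_qf tendsto_scaleR assms
      isCont_tendsto_compose[OF isCont_H[OF assms(2)]]) simp

lemma Omega_fin: "(x, v) \<in> Omega g \<Longrightarrow> g x \<noteq> \<infinity> \<and> g x \<noteq> -\<infinity>"
  unfolding Omega_def lim_subdiff_def by auto

lemma quad_sum:
  assumes xb: "xb \<in> U" and gxb: "g xb \<noteq> \<infinity>" "g xb \<noteq> -\<infinity>"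
  shows "quad (\<lambda>y. f y + g y) xb (G xb + vb)
    = {(\<lambda>w. ereal (qf (H xb) w / 2) + p w) | p. p \<in> quad g xb vb}"
proof (rule set_eqI iffI)+
  fix q assume "q \<in> quad (\<lambda>y. f y + g y) xb (G xb + vb)"
  then obtain xs us where gq: "gen_quad_form q" and om: "\<And>k. (xs k, us k) \<in> Omega (\<lambda>y. f y + g y)"
    and xs: "xs \<longlonglongrightarrow> xb" and us: "us \<longlonglongrightarrow> G xb + vb"
    and fg: "(\<lambda>k. f (xs k) + g (xs k)) \<longlonglongrightarrow> f xb + g xb"
    and ep: "epi_conv (\<lambda>k w. ereal (1/2) * d2 (\<lambda>y. f y + g y) (xs k) (us k) w) q"
    unfolding quad_def by blast
  obtain N where N: "\<And>k. xs (k + N) \<in> U" using seqU[OF xs xb] by blast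
  define xs' where "xs' k = xs (k + N)" for k
  define vs' where "vs' k = us (k + N) - G (xs' k)" for k
  have xs'U: "xs' k \<in> U" for k using N by (simp add: xs'_def)
  have usk: "us (k + N) = G (xs' k) + vs' k" for k by (simp add: vs'_def)
  have om': "(xs' k, vs' k) \<in> Omega g" for k
    using om[of "k + N"] Omega_sum[OF xs'U[of k], of "vs' k" g] by (simp add: usk xs'_def)
  have xs'x: "xs' \<longlonglongrightarrow> xb" unfolding xs'_def by (rule LIMSEQ_ignore_initial_segment[OF xs])
  have "vs' \<longlonglongrightarrow> (G xb + vb) - G xb" unfolding vs'_def
    by (intro tendsto_diff LIMSEQ_ignore_initial_segment[OF us] isCont_tendsto_compose[OF isCont_G[OF xb] xs'x])
  then have vs'v: "vs' \<longlonglongrightarrow> vb" by simp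
  have "(\<lambda>k. (f (xs' k) + g (xs' k)) + ereal (- f0 (xs' k))) \<longlonglongrightarrow> (f xb + g xb) + ereal (- f0 xb)"
  proof (rule tendsto_add_ereal)
    show "\<bar>f xb + g xb\<bar> \<noteq> \<infinity>" using fU[OF xb] gxb by (cases "g xb") auto
    show "(\<lambda>k. f (xs' k) + g (xs' k)) \<longlonglongrightarrow> f xb + g xb"
      unfolding xs'_def by (rule LIMSEQ_ignore_initial_segment[OF fg])
    show "(\<lambda>k. ereal (- f0 (xs' k))) \<longlonglongrightarrow> ereal (- f0 xb)"
      by (intro tendsto_intros isCont_tendsto_compose[OF isCont_f0[OF xb] xs'x])
  qed simp
  moreover have "(f y + g y) + ereal (- f0 y) = g y" if "y \<in> U" for y
    using fU[OF that] by (cases "g y") auto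
  ultimately have gconv: "(\<lambda>k. g (xs' k)) \<longlonglongrightarrow> g xb" using xs'U xb by simp
  define p where "p w = q w + ereal (qf ((-1) *\<^sub>R H xb) w / 2)" for w
  have gp: "gen_quad_form p" unfolding p_def[abs_def] by (rule gqf_add[OF gq])
  have "epi_conv (\<lambda>k w. ereal (1/2) * d2 g (xs' k) (vs' k) w)
      (\<lambda>w. q w + ereal (qf ((-1) *\<^sub>R H xb) w / 2))"
  proof (rule epi_add[OF epi_shift[OF ep, of N], where psi="\<lambda>k w. qf ((-1) *\<^sub>R H (xs' k)) w / 2"])
    fix ws w assume ws: "ws \<longlonglongrightarrow> (w::real^'n)"
    have "ereal (1/2) * d2 g (xs' k) (vs' k) (ws k) =
        ereal (1/2) * d2 (\<lambda>y. f y + g y) (xs (k + N)) (us (k + N)) (ws k)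
        + ereal (qf ((-1) *\<^sub>R H (xs' k)) (ws k) / 2)" for k
    proof -
      have gx: "g (xs' k) \<noteq> \<infinity>" "g (xs' k) \<noteq> -\<infinity>" using Omega_fin[OF om'[of k]] by auto
      show ?thesis
        unfolding usk xs'_def[symmetric] d2_sum[where g=g, OF xs'U gx] ereal_half_distr
        by (cases "d2 g (xs' k) (vs' k) (ws k)") (auto simp: qf_scaleA qf_neg)
    qed
    then show "eventually (\<lambda>k. ereal (1/2) * d2 g (xs' k) (vs' k) (ws k) =
        ereal (1/2) * d2 (\<lambda>y. f y + g y) (xs (k + N)) (us (k + N)) (ws k)
        + ereal (qf ((-1) *\<^sub>R H (xs' k)) (ws k) / 2)) sequentially
      \<and> (\<lambda>k. qf ((-1) *\<^sub>R H (xs' k)) (ws k) / 2) \<longlonglongrightarrow> qf ((-1) *\<^sub>R H xb) w / 2"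
      using qf_H_tendsto[OF xs'x xb ws, of "-1"] by simp
  qed
  then have ep': "epi_conv (\<lambda>k w. ereal (1/2) * d2 g (xs' k) (vs' k) w) p"
    unfolding p_def[abs_def] .
  have "p \<in> quad g xb vb" unfolding quad_def
    using gp om' xs'x vs'v gconv ep' by blast
  moreover have "q = (\<lambda>w. ereal (qf (H xb) w / 2) + p w)"
  proof
    fix w show "q w = ereal (qf (H xb) w / 2) + p w"
      unfolding p_def by (cases "q w") (auto simp: qf_scaleA qf_neg)
  qed
  ultimately show "q \<in> {(\<lambda>w. ereal (qf (H xb) w / 2) + p w) | p. p \<in> quad g xb vb}" by blast
next
  fix q assume "q \<in> {(\<lambda>w. ereal (qf (H xb) w / 2) + p w) | p. p \<in> quad g xb vb}"
  then obtain p where q: "q = (\<lambda>w. ereal (qf (H xb) w / 2) + p w)" and "p \<in> quad g xb vb" by blast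
  then obtain xs vs where gp: "gen_quad_form p" and om: "\<And>k. (xs k, vs k) \<in> Omega g"
    and xs: "xs \<longlonglongrightarrow> xb" and vs: "vs \<longlonglongrightarrow> vb"
    and gc: "(\<lambda>k. g (xs k)) \<longlonglongrightarrow> g xb"
    and ep: "epi_conv (\<lambda>k w. ereal (1/2) * d2 g (xs k) (vs k) w) p"
    unfolding quad_def by blast
  obtain N where N: "\<And>k. xs (k + N) \<in> U" using seqU[OF xs xb] by blast
  define xs' where "xs' k = xs (k + N)" for k
  define us' where "us' k = G (xs' k) + vs (k + N)" for k
  have xs'U: "xs' k \<in> U" for k using N by (simp add: xs'_def)
  have om': "(xs' k, us' k) \<in> Omega (\<lambda>y. f y + g y)" for k
    using om[of "k + N"] Omega_sum[OF xs'U[of k], of "vs (k + N)" g] by (simp add: us'_def xs'_def)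
  have xs'x: "xs' \<longlonglongrightarrow> xb" unfolding xs'_def by (rule LIMSEQ_ignore_initial_segment[OF xs])
  have us'u: "us' \<longlonglongrightarrow> G xb + vb" unfolding us'_def
    by (intro tendsto_add LIMSEQ_ignore_initial_segment[OF vs] isCont_tendsto_compose[OF isCont_G[OF xb] xs'x])
  have "(\<lambda>k. ereal (f0 (xs' k)) + g (xs' k)) \<longlonglongrightarrow> ereal (f0 xb) + g xb"
  proof (rule tendsto_add_ereal)
    show "\<bar>g xb\<bar> \<noteq> \<infinity>" using gxb by (cases "g xb") auto
    show "(\<lambda>k. g (xs' k)) \<longlonglongrightarrow> g xb"
      unfolding xs'_def by (rule LIMSEQ_ignore_initial_segment[OF gc])
    show "(\<lambda>k. ereal (f0 (xs' k))) \<longlonglongrightarrow> ereal (f0 xb)"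
      by (intro tendsto_intros isCont_tendsto_compose[OF isCont_f0[OF xb] xs'x])
  qed simp
  then have fgc: "(\<lambda>k. f (xs' k) + g (xs' k)) \<longlonglongrightarrow> f xb + g xb" using fU xs'U xb by simp
  have gq: "gen_quad_form q"
  proof -
    have "gen_quad_form (\<lambda>w. p w + ereal (qf (H xb) w / 2))" by (rule gqf_add[OF gp])
    then show ?thesis unfolding q by (simp add: add.commute)
  qed
  have "epi_conv (\<lambda>k w. ereal (1/2) * d2 (\<lambda>y. f y + g y) (xs' k) (us' k) w)
      (\<lambda>w. p w + ereal (qf (H xb) w / 2))"
  proof (rule epi_add[OF epi_shift[OF ep, of N], where psi="\<lambda>k w. qf (1 *\<^sub>R H (xs' k)) w / 2"])
    fix ws w assume ws: "ws \<longlonglongrightarrow> (w::real^'n)"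
    have "ereal (1/2) * d2 (\<lambda>y. f y + g y) (xs' k) (us' k) (ws k) =
        ereal (1/2) * d2 g (xs (k + N)) (vs (k + N)) (ws k)
        + ereal (qf (1 *\<^sub>R H (xs' k)) (ws k) / 2)" for k
    proof -
      have gx: "g (xs' k) \<noteq> \<infinity>" "g (xs' k) \<noteq> -\<infinity>"
        using Omega_fin[OF om[of "k + N"]] by (auto simp: xs'_def)
      show ?thesis
        unfolding us'_def xs'_def[symmetric] d2_sum[where g=g, OF xs'U gx] ereal_half_distr
        by simp
    qed
    then show "eventually (\<lambda>k. ereal (1/2) * d2 (\<lambda>y. f y + g y) (xs' k) (us' k) (ws k) =
        ereal (1/2) * d2 g (xs (k + N)) (vs (k + N)) (ws k)
        + ereal (qf (1 *\<^sub>R H (xs' k)) (ws k) / 2)) sequentially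
      \<and> (\<lambda>k. qf (1 *\<^sub>R H (xs' k)) (ws k) / 2) \<longlonglongrightarrow> qf (H xb) w / 2"
      using qf_H_tendsto[OF xs'x xb ws, of 1] by simp
  qed
  then have ep': "epi_conv (\<lambda>k w. ereal (1/2) * d2 (\<lambda>y. f y + g y) (xs' k) (us' k) w) q"
    unfolding q by (simp add: add.commute)
  show "q \<in> quad (\<lambda>y. f y + g y) xb (G xb + vb)" unfolding quad_def
    using gq om' xs'x us'u fgc ep' by blast
qed

end

lemma reg_subdiff_zero:
  assumes v: "v \<in> reg_subdiff (\<lambda>_. 0 :: ereal) x"
  shows "v = 0"
proof (rule ccontr)
  assume nz: "v \<noteq> 0"
  then have nv: "norm v > 0" by simp
  have "\<forall>e>0. \<exists>d>0. \<forall>y. dist y x < d \<longrightarrow> ereal (real_of_ereal 0 + v \<bullet> (y - x) - e * norm (y - x)) \<le> 0"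
    using v unfolding reg_subdiff_def by blast
  from this[rule_format, of "norm v / 2"] nv obtain d where d: "d > 0"
    "\<And>y. dist y x < d \<Longrightarrow> ereal (v \<bullet> (y - x) - norm v / 2 * norm (y - x)) \<le> 0" by auto
  define s where "s = d / (2 * norm v)"
  have s: "s > 0" using d nv by (simp add: s_def)
  have "dist (x + s *\<^sub>R v) x = s * norm v" using s by (simp add: dist_norm)
  also have "\<dots> < d" using d nv by (simp add: s_def)
  finally have lt: "dist (x + s *\<^sub>R v) x < d" .
  have "ereal (v \<bullet> ((x + s *\<^sub>R v) - x) - norm v / 2 * norm ((x + s *\<^sub>R v) - x)) \<le> 0"
    by (rule d(2)[OF lt])
  then have le: "v \<bullet> (s *\<^sub>R v) - norm v / 2 * norm (s *\<^sub>R v) \<le> 0" by simp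
  have i1: "v \<bullet> (s *\<^sub>R v) = s * (norm v)\<^sup>2" by (simp add: power2_norm_eq_inner)
  have i2: "norm (s *\<^sub>R v) = s * norm v" using s by simp
  have "s * (norm v)\<^sup>2 - norm v / 2 * (s * norm v) = s * (norm v)\<^sup>2 / 2"
    by (simp add: power2_eq_square field_simps)
  moreover have "s * (norm v)\<^sup>2 / 2 > 0" using s nv by simp
  ultimately show False using le unfolding i1 i2 by linarith
qed

lemma lim_subdiff_zero: "v \<in> lim_subdiff (\<lambda>_. 0 :: ereal) x \<Longrightarrow> v = 0"
proof -
  assume "v \<in> lim_subdiff (\<lambda>_. 0 :: ereal) x"
  then obtain xs vs where "\<And>k. vs k \<in> reg_subdiff (\<lambda>_. 0 :: ereal) (xs k)" "vs \<longlonglongrightarrow> v"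
    unfolding lim_subdiff_def by blast
  then have "vs = (\<lambda>_. 0)" "vs \<longlonglongrightarrow> v" using reg_subdiff_zero by auto
  then show "v = 0" using LIMSEQ_unique tendsto_const by metis
qed

lemma zero_in_lim_subdiff: "0 \<in> lim_subdiff (\<lambda>_. 0 :: ereal) (x::real^'n::finite)"
proof -
  have "0 \<in> reg_subdiff (\<lambda>_. 0 :: ereal) y" for y :: "real^'n"
    unfolding reg_subdiff_def by (auto intro!: exI[of _ 1])
  then show ?thesis unfolding lim_subdiff_def
    by (intro CollectI conjI exI[of _ "\<lambda>_. x"] exI[of _ "\<lambda>_. 0"]) auto
qed

lemma d2_zero: "d2 (\<lambda>_. 0 :: ereal) x 0 = (\<lambda>w. 0)"
  unfolding d2_def sdq_def by (rule ext) (simp add: prod_filter_eq_bot case_prod_unfold Liminf_const)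

lemma epi_zero: "epi_conv (\<lambda>k w. 0) (\<lambda>w. 0)"
  unfolding epi_conv_def by (auto simp: Liminf_const Limsup_const intro!: exI[of _ "\<lambda>_. w" for w])

lemma gqf_zero: "gen_quad_form (\<lambda>w. 0)"
  unfolding gen_quad_form_def
  by (intro exI[of _ 0] exI[of _ UNIV]) (auto simp: qf_def zero_ereal_def transpose_def vec_eq_iff)

lemma Omega_zero: "(x, 0) \<in> Omega (\<lambda>_. 0 :: ereal)"
proof -
  have "sdq (\<lambda>_. 0 :: ereal) x 0 t = (\<lambda>w. 0)" for t by (rule ext) (simp add: sdq_def)
  then have "twice_epi_diff (\<lambda>_. 0 :: ereal) x 0"
    unfolding twice_epi_diff_def d2_zero by (simp add: epi_zero)
  moreover have "gen_quad_form (d2 (\<lambda>_. 0 :: ereal) x 0)"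
    by (subst d2_zero) (rule gqf_zero)
  ultimately show ?thesis unfolding Omega_def gen_twice_diff_def
    using zero_in_lim_subdiff by auto
qed

lemma quad_zero: "quad (\<lambda>_. 0 :: ereal) (xb::real^'n::finite) 0 = {\<lambda>w. 0}"
proof (rule set_eqI iffI)+
  fix q :: "real^'n \<Rightarrow> ereal" assume "q \<in> quad (\<lambda>_. 0 :: ereal) xb 0"
  then obtain xs vs where om: "\<And>k. (xs k, vs k) \<in> Omega (\<lambda>_. 0 :: ereal)"
    and ep: "epi_conv (\<lambda>k w. ereal (1/2) * d2 (\<lambda>_. 0 :: ereal) (xs k) (vs k) w) q"
    unfolding quad_def by blast
  have "vs k = 0" for k using om[of k] lim_subdiff_zero unfolding Omega_def by auto
  then have "epi_conv (\<lambda>k w. 0) q" using ep by (simp add: d2_zero)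
  then have "q = (\<lambda>w. 0)" using epi_unique epi_zero by blast
  then show "q \<in> {\<lambda>w. 0}" by simp
next
  fix q :: "real^'n \<Rightarrow> ereal" assume "q \<in> {\<lambda>w. 0 :: ereal}"
  then have q: "q = (\<lambda>w. 0)" by simp
  show "q \<in> quad (\<lambda>_. 0 :: ereal) xb 0" unfolding quad_def q
    by (intro CollectI conjI gqf_zero exI[of _ "\<lambda>_. xb"] exI[of _ "\<lambda>_. 0"])
       (auto simp: Omega_zero d2_zero epi_zero)
qed

context c2loc begin

lemma d2_f:
  assumes x: "x \<in> U" shows "d2 f x (G x) w = ereal (qf (H x) w)"
  using d2_sum[where g="\<lambda>_. 0" and v=0, OF x] by (simp add: d2_zero)

lemma quad_f:
  assumes xb: "xb \<in> U" shows "quad f xb (G xb) = {\<lambda>w. ereal (qf (H xb) w / 2)}"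
  using quad_sum[where g="\<lambda>_. 0" and vb=0, OF xb] by (simp add: quad_zero)

end

theorem theorem6p6:
  fixes f g :: "real^'n::finite \<Rightarrow> ereal" and xb vb :: "real^'n"
    and G :: "real^'n \<Rightarrow> real^'n" and H :: "real^'n \<Rightarrow> real^'n^'n"
  assumes "C2_around f xb G H"
    and "proper_fun g" and "lsc_fun g"
    and "vb \<in> lim_subdiff g xb"
  shows "G xb + vb \<in> lim_subdiff (\<lambda>x. f x + g x) xb
    \<and> quad (\<lambda>x. f x + g x) xb (G xb + vb)
        = {(\<lambda>w. ereal (qf (H xb) w / 2) + p w) | p. p \<in> quad g xb vb}
    \<and> quad f xb (G xb) = {(\<lambda>w. ereal (1/2) * d2 f xb (G xb) w)}
    \<and> {(\<lambda>w. ereal (1/2) * d2 f xb (G xb) w)} = {(\<lambda>w. ereal (qf (H xb) w / 2))}"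
proof -
  from assms(1) obtain U f0 where HU: "open U" "xb \<in> U" "\<forall>x\<in>U. f x = ereal (f0 x)"
    "\<forall>x\<in>U. (f0 has_derivative (\<lambda>w. G x \<bullet> w)) (at x)"
    "\<forall>x\<in>U. (G has_derivative (\<lambda>w. H x *v w)) (at x)" "continuous_on U H"
    unfolding C2_around_def by blast
  interpret c2loc f f0 G H U using HU by unfold_locales auto
  have gxb: "g xb \<noteq> \<infinity>" "g xb \<noteq> -\<infinity>" using assms(4) unfolding lim_subdiff_def by auto
  have e: "(\<lambda>w. ereal (1/2) * d2 f xb (G xb) w) = (\<lambda>w. ereal (qf (H xb) w / 2))"
    by (rule ext) (simp add: d2_f[OF HU(2)])
  show ?thesis
    using lim_sum1[OF HU(2) assms(4)] quad_sum[where g=g, OF HU(2) gxb] quad_f[OF HU(2)] e by simp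
qed

end
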